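(* Let $k\ge3$. Let $C$ be a cycle of length $2k$ and $P$ a path of length $\ell\in\{2k-1,2k,2k+1\}$ such that $E(C)\cap E(P)=\emptyset$, $V(C)\cap V(P)\neq\emptyset$, and no end vertex of $P$ lies in $V(C)$. If $H:=C\cup P$ has girth at least $2k-2$, then $H$ can be decomposed into two paths whose lengths lie in $\{2k,\ell\}$ such that each of the two paths has exactly one end vertex of $P$ as one of its end vertices.
   Context: Graphs are finite and simple; length = number of edges; girth = length of a shortest cycle. A decomposition of a graph is a set of subgraphs whose edge sets partition its edge set. *)

theory Defs
  imports Main
begin

text \<open>Graphs are represented by their edge sets (edges are 2-element vertex sets).\<close>

definition path_edges :: "'a list \<Rightarrow> 'a set set" where
  "path_edges vs = set (map (\<lambda>(x, y). {x, y}) (zip vs (tl vs)))"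

definition is_path :: "'a list \<Rightarrow> bool" where
  "is_path vs \<longleftrightarrow> vs \<noteq> [] \<and> distinct vs"

definition path_len :: "'a list \<Rightarrow> nat" where
  "path_len vs = length vs - 1"

definition cycle_edges :: "'a list \<Rightarrow> 'a set set" where
  "cycle_edges vs = path_edges (vs @ [hd vs])"

definition is_cycle :: "'a list \<Rightarrow> bool" where
  "is_cycle vs \<longleftrightarrow> length vs \<ge> 3 \<and> distinct vs"

definition girth_at_least :: "'a set set \<Rightarrow> nat \<Rightarrow> bool" where
  "girth_at_least E g \<longleftrightarrow> (\<forall>cy. is_cycle cy \<and> cycle_edges cy \<subseteq> E \<longrightarrow> length cy \<ge> g)"

end

theory Submission
  imports Defs
begin

lemma pe_Nil[simp]: "path_edges [] = {}" by (simp add: path_edges_def)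
lemma pe_single[simp]: "path_edges [a] = {}" by (simp add: path_edges_def)
lemma pe_Cons2[simp]: "path_edges (a # b # xs) = insert {a,b} (path_edges (b # xs))"
  by (simp add: path_edges_def)

lemma pe_Cons: "xs \<noteq> [] \<Longrightarrow> path_edges (a # xs) = insert {a, hd xs} (path_edges xs)"
  by (cases xs) auto

lemma pe_append: "path_edges (xs @ ys) = path_edges xs \<union> path_edges ys \<union>
   (if xs \<noteq> [] \<and> ys \<noteq> [] then {{last xs, hd ys}} else {})"
proof (induction xs)
  case Nil then show ?case by simp
next
  case (Cons a xs)
  show ?case
  proof (cases "xs = []")
    case True
    then show ?thesis by (cases ys) (simp_all add: pe_Cons)
  next
    case False
    have "path_edges ((a # xs) @ ys) = insert {a, hd xs} (path_edges (xs @ ys))"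
      using False by (simp add: pe_Cons)
    also have "\<dots> = insert {a, hd xs} (path_edges xs \<union> path_edges ys \<union>
       (if ys \<noteq> [] then {{last xs, hd ys}} else {}))" using Cons.IH False by simp
    finally show ?thesis using False by (simp add: pe_Cons)
  qed
qed

lemma pe_rev[simp]: "path_edges (rev xs) = path_edges xs"
proof (induction xs)
  case Nil then show ?case by simp
next
  case (Cons a xs)
  show ?case
  proof (cases "xs = []")
    case True then show ?thesis by simp
  next
    case False
    have "path_edges (rev (a # xs)) = path_edges (rev xs @ [a])" by simp
    also have "\<dots> = path_edges xs \<union> {{last (rev xs), a}}"
      using False Cons.IH by (simp add: pe_append)
    also have "\<dots> = path_edges (a # xs)"
    proof -
      have "{hd xs, a} = {a, hd xs}" by blast
      then show ?thesis using False by (simp add: pe_Cons last_rev)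
    qed
    finally show ?thesis .
  qed
qed

lemma pe_subset_set: "e \<in> path_edges xs \<Longrightarrow> e \<subseteq> set xs"
proof (induction xs rule: induct_list012)
  case (3 a b xs) then show ?case by auto
qed auto

lemma pe_finite[simp]: "finite (path_edges xs)"
  by (simp add: path_edges_def)

lemma card_pe: "distinct xs \<Longrightarrow> card (path_edges xs) = length xs - 1"
proof (induction xs rule: induct_list012)
  case (3 a b xs)
  have "{a,b} \<notin> path_edges (b # xs)" using 3(3) pe_subset_set by fastforce
  then show ?case using 3 by simp
qed auto

lemma pe_take_drop: "z < length xs \<Longrightarrow> path_edges (take (Suc z) xs) \<union> path_edges (drop z xs) = path_edges xs"
proof -
  assume z: "z < length xs"
  have d: "drop z xs = xs ! z # drop (Suc z) xs" using z by (simp add: Cons_nth_drop_Suc)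
  have t: "take (Suc z) xs = take z xs @ [xs ! z]" using z by (simp add: take_Suc_conv_app_nth)
  have e1: "path_edges xs = path_edges (take z xs) \<union> path_edges (drop z xs) \<union>
     (if take z xs \<noteq> [] then {{last (take z xs), xs ! z}} else {})"
  proof -
    have "path_edges xs = path_edges (take z xs @ drop z xs)" by simp
    also have "\<dots> = path_edges (take z xs) \<union> path_edges (drop z xs) \<union>
     (if take z xs \<noteq> [] \<and> drop z xs \<noteq> [] then {{last (take z xs), hd (drop z xs)}} else {})"
      by (rule pe_append)
    finally show ?thesis using d by simp
  qed
  have e2: "path_edges (take (Suc z) xs) = path_edges (take z xs) \<union>
     (if take z xs \<noteq> [] then {{last (take z xs), xs ! z}} else {})"
    unfolding t pe_append by simp
  show ?thesis using e1 e2 by blast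
qed

lemma pe_take_drop_sub: "path_edges (take j xs) \<union> path_edges (drop j xs) \<subseteq> path_edges xs"
proof -
  have "path_edges xs = path_edges (take j xs @ drop j xs)" by simp
  also have "\<dots> = path_edges (take j xs) \<union> path_edges (drop j xs) \<union>
     (if take j xs \<noteq> [] \<and> drop j xs \<noteq> [] then {{last (take j xs), hd (drop j xs)}} else {})"
    by (rule pe_append)
  finally show ?thesis by blast
qed

lemma pe_take_sub: "path_edges (take j xs) \<subseteq> path_edges xs"
  using pe_take_drop_sub by blast

lemma pe_drop_sub: "path_edges (drop j xs) \<subseteq> path_edges xs"
  using pe_take_drop_sub by blast

lemma pe_seg_sub: "path_edges (drop i (take j xs)) \<subseteq> path_edges xs"
  using pe_drop_sub[of i "take j xs"] pe_take_sub[of j xs] by blast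

lemma ce_alt: "c \<noteq> [] \<Longrightarrow> cycle_edges c = path_edges c \<union> {{last c, hd c}}"
  unfolding cycle_edges_def by (simp add: pe_append)

lemma pe_sub_ce: "path_edges c \<subseteq> cycle_edges c"
proof (cases "c = []")
  case False then show ?thesis using ce_alt[of c] by blast
qed simp

lemma hd_last_distinct: "distinct xs \<Longrightarrow> 2 \<le> length xs \<Longrightarrow> hd xs \<noteq> last xs"
  by (cases xs) auto

lemma ce_rotate1: "cycle_edges (rotate1 c) = cycle_edges c"
proof (cases c)
  case Nil then show ?thesis by simp
next
  case (Cons a t)
  show ?thesis
  proof (cases "t = []")
    case True then show ?thesis using Cons by simp
  next
    case False
    have "cycle_edges (rotate1 c) = path_edges (t @ [a]) \<union> {{a, hd t}}"
      using Cons False by (simp add: ce_alt)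
    also have "\<dots> = path_edges t \<union> {{last t, a}} \<union> {{a, hd t}}"
      using False by (simp add: pe_append)
    also have "\<dots> = cycle_edges c"
      using Cons False by (auto simp: ce_alt pe_Cons)
    finally show ?thesis .
  qed
qed

lemma ce_rotate: "cycle_edges (rotate m c) = cycle_edges c"
  by (induction m) (simp_all add: ce_rotate1)

definition refl :: "'a list \<Rightarrow> 'a list" where
  "refl c = hd c # rev (tl c)"

lemma ce_refl: "c \<noteq> [] \<Longrightarrow> cycle_edges (refl c) = cycle_edges c"
proof (cases c)
  case (Cons a t)
  have r: "a # rev t @ [a] = rev (a # t @ [a])" by simp
  have "cycle_edges (refl c) = path_edges (a # rev t @ [a])"
    using Cons by (simp add: refl_def cycle_edges_def)
  also have "\<dots> = path_edges (a # t @ [a])" unfolding r pe_rev ..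
  finally show ?thesis using Cons by (simp add: cycle_edges_def)
qed simp

lemma refl_len[simp]: "c \<noteq> [] \<Longrightarrow> length (refl c) = length c"
  by (cases c) (auto simp: refl_def)

lemma refl_set[simp]: "c \<noteq> [] \<Longrightarrow> set (refl c) = set c"
  by (cases c) (auto simp: refl_def)

lemma refl_distinct[simp]: "c \<noteq> [] \<Longrightarrow> distinct (refl c) = distinct c"
  by (cases c) (auto simp: refl_def)

lemma refl_nth0: "c \<noteq> [] \<Longrightarrow> refl c ! 0 = c ! 0"
  by (cases c) (auto simp: refl_def)

lemma refl_nth: "j < length c \<Longrightarrow> 0 < j \<Longrightarrow> refl c ! j = c ! (length c - j)"
proof (cases c)
  case (Cons a t)
  assume j: "j < length c" "0 < j"
  then obtain i where i: "j = Suc i" by (cases j) auto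
  have "refl c ! j = rev t ! i" using Cons i by (simp add: refl_def)
  also have "\<dots> = t ! (length t - Suc i)" using Cons i j by (simp add: rev_nth)
  also have "\<dots> = c ! (length c - j)" using Cons i j
    by (simp add: Suc_diff_Suc)
  finally show ?thesis .
qed simp

lemma card_ce: "is_cycle c \<Longrightarrow> card (cycle_edges c) = length c"
proof -
  assume cy: "is_cycle c"
  then obtain a t where c: "c = a # t" and t2: "2 \<le> length t" and dis: "distinct (a # t)"
    unfolding is_cycle_def by (cases c) auto
  have tne: "t \<noteq> []" using t2 by auto
  have ce: "cycle_edges c = insert {a, hd t} (path_edges (t @ [a]))"
    using c tne by (simp add: cycle_edges_def pe_Cons)
  have d2: "distinct (t @ [a])" using dis by simp
  have "{a, hd t} \<notin> path_edges (t @ [a])"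
  proof
    assume "{a, hd t} \<in> path_edges (t @ [a])"
    then have "{a, hd t} = {last t, a} \<or> {a, hd t} \<in> path_edges t"
      using tne by (simp add: pe_append)
    moreover have "{a, hd t} \<notin> path_edges t" using pe_subset_set dis by fastforce
    moreover have "hd t \<noteq> last t" using hd_last_distinct[of t] dis t2 by simp
    ultimately show False by (auto simp: doubleton_eq_iff)
  qed
  then have "card (cycle_edges c) = Suc (card (path_edges (t @ [a])))" using ce by simp
  also have "\<dots> = length c" using card_pe[OF d2] c by simp
  finally show ?thesis .
qed

lemma take_arc: "1 \<le> e \<Longrightarrow> e < length c \<Longrightarrow>
   take (Suc e) c = c ! 0 # take (e - 1) (tl c) @ [c ! e]"
proof (cases c)
  case (Cons a t)
  assume e: "1 \<le> e" "e < length c"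
  have "take (Suc e) c = take e c @ [c ! e]" using e by (simp add: take_Suc_conv_app_nth)
  moreover have "take e c = a # take (e - 1) t" using Cons e by (cases e) auto
  ultimately show ?thesis using Cons by simp
qed simp

lemma set_take_tl: "x \<in> set (take m (tl c)) \<Longrightarrow> \<exists>i. 1 \<le> i \<and> i \<le> m \<and> i < length c \<and> x = c ! i"
proof -
  assume "x \<in> set (take m (tl c))"
  then obtain j where j: "j < length (take m (tl c))" "x = take m (tl c) ! j"
    by (auto simp: in_set_conv_nth)
  then have "x = c ! Suc j" by (cases c) auto
  then show ?thesis using j by (intro exI[of _ "Suc j"]) (cases c; auto)
qed

lemma gcl:
  assumes cy: "is_cycle c" and len: "length c = n" and cH: "cycle_edges c \<subseteq> H"
    and gir: "girth_at_least H g"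
    and dq: "distinct q" and qne: "q \<noteq> []" and hq: "hd q = c ! e" and lq: "last q = c ! 0"
    and e1: "1 \<le> e" and en: "e < n"
    and inter: "\<forall>i. 1 \<le> i \<and> i < e \<longrightarrow> c ! i \<notin> set q"
    and qH: "path_edges q \<subseteq> H" and disj: "path_edges q \<inter> cycle_edges c = {}"
  shows "g \<le> length q - 1 + e"
proof -
  define A where "A = take (e - 1) (tl c)"
  define cyc where "cyc = q @ A"
  have dc: "distinct c" and n3: "3 \<le> n" using cy len by (auto simp: is_cycle_def)
  have dA: "distinct A" unfolding A_def using dc by (cases c) auto
  have disjA: "set q \<inter> set A = {}"
  proof (rule ccontr)
    assume "set q \<inter> set A \<noteq> {}"
    then obtain x where x: "x \<in> set q" "x \<in> set A" by blast
    have "x \<in> set (take (e - 1) (tl c))" using x(2) unfolding A_def .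
    from set_take_tl[OF this] obtain i where i: "1 \<le> i" "i \<le> e - 1" "x = c ! i" by blast
    have "i < e" using i e1 by simp
    then show False using inter x i by blast
  qed
  have lenA: "length A = e - 1" unfolding A_def using len en by simp
  have dcyc: "distinct cyc" unfolding cyc_def using dq dA disjA by simp
  have hne: "c ! e \<noteq> c ! 0" using dc en e1 len by (simp add: nth_eq_iff_index_eq)
  have lq2: "2 \<le> length q"
  proof (rule ccontr)
    assume "\<not> 2 \<le> length q"
    moreover have "length q \<noteq> 0" using qne by simp
    ultimately have "length q = 1" by linarith
    then have "hd q = last q" by (cases q) auto
    then show False using hq lq hne by simp
  qed
  have ce_cyc: "cycle_edges cyc = path_edges q \<union> path_edges (take (Suc e) c)"
  proof -
    have "cycle_edges cyc = path_edges (q @ (A @ [c ! e]))"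
      unfolding cycle_edges_def cyc_def using qne hq by simp
    also have "\<dots> = path_edges q \<union> path_edges (A @ [c ! e]) \<union> {{c ! 0, hd (A @ [c ! e])}}"
      using qne lq by (simp add: pe_append)
    also have "\<dots> = path_edges q \<union> path_edges (c ! 0 # A @ [c ! e])"
      by (simp add: pe_Cons)
    also have "c ! 0 # A @ [c ! e] = take (Suc e) c" unfolding A_def using take_arc[of e c] e1 en len by simp
    finally show ?thesis .
  qed
  have sub: "cycle_edges cyc \<subseteq> H"
    using ce_cyc qH cH pe_take_sub[of "Suc e" c] pe_sub_ce[of c] by blast
  have l3: "3 \<le> length cyc"
  proof (rule ccontr)
    assume "\<not> 3 \<le> length cyc"
    then have "length q = 2" and "e = 1" using lq2 e1 lenA unfolding cyc_def by auto
    then obtain a b where q: "q = [a, b]" by (auto simp: length_Suc_conv numeral_2_eq_2)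
    then have "a = c ! 1" "b = c ! 0" using hq lq \<open>e = 1\<close> by auto
    then have "{c ! 0, c ! 1} \<in> path_edges q" using q by (auto simp: insert_commute)
    moreover have "{c ! 0, c ! 1} \<in> cycle_edges c"
    proof -
      obtain a' b' t where "c = a' # b' # t" using n3 len
        by (metis Suc_le_length_iff numeral_3_eq_3)
      then show ?thesis by (simp add: cycle_edges_def)
    qed
    ultimately show False using disj by blast
  qed
  have "g \<le> length cyc" using gir sub dcyc l3 unfolding girth_at_least_def is_cycle_def by blast
  then show ?thesis unfolding cyc_def using lenA e1 by simp
qed

definition good :: "nat \<Rightarrow> nat \<Rightarrow> 'a set set \<Rightarrow> 'a list \<Rightarrow> bool" where
  "good N l E p \<longleftrightarrow> (\<exists>q1 q2. is_path q1 \<and> is_path q2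
           \<and> path_edges q1 \<union> path_edges q2 = E
           \<and> path_edges q1 \<inter> path_edges q2 = {}
           \<and> path_len q1 \<in> {N, l} \<and> path_len q2 \<in> {N, l}
           \<and> card ({hd q1, last q1} \<inter> {hd p, last p}) = 1
           \<and> card ({hd q2, last q2} \<inter> {hd p, last p}) = 1)"

lemma set_drop_nth: "x \<in> set (drop s xs) \<Longrightarrow> \<exists>i. s \<le> i \<and> i < length xs \<and> x = xs ! i"
proof -
  assume "x \<in> set (drop s xs)"
  then obtain j where "j < length (drop s xs)" "x = drop s xs ! j" by (auto simp: in_set_conv_nth)
  then show ?thesis by (intro exI[of _ "s + j"]) auto
qed

lemma cl:
  assumes cy: "is_cycle c" and len: "length c = n" and dp: "distinct p" and lp: "length p = Suc l"
    and zl: "z < length p" and cz: "c ! 0 = p ! z" and s1: "1 \<le> s" and sn: "s < n"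
    and zs: "z + s = n \<or> z + s = l"
    and A: "\<forall>i. 1 \<le> i \<and> i \<le> s \<longrightarrow> c ! i \<notin> set p"
    and B: "\<forall>j. z < j \<and> j < length p \<longrightarrow> p ! j \<notin> set c"
    and hp: "hd p \<notin> set c" and lpc: "last p \<notin> set c"
    and disj: "cycle_edges c \<inter> path_edges p = {}"
  shows "good n l (cycle_edges c \<union> path_edges p) p"
proof -
  have dc: "distinct c" and n3: "3 \<le> n" using cy len by (auto simp: is_cycle_def)
  have cne: "c \<noteq> []" and pne: "p \<noteq> []" using n3 len zl by auto
  define q1 where "q1 = take (Suc z) p @ take s (tl c)"
  define q2 where "q2 = rev (drop s c @ drop z p)"
  have csin: "c ! s \<in> set c" using sn len by simp
  have z0: "z \<noteq> 0"
  proof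
    assume "z = 0" then have "hd p = c ! 0" using cz pne by (simp add: hd_conv_nth)
    then show False using hp cne len n3 by (metis hd_conv_nth hd_in_set)
  qed
  have d1: "distinct q1"
  proof -
    have "set (take (Suc z) p) \<inter> set (take s (tl c)) = {}"
    proof (rule ccontr)
      assume "set (take (Suc z) p) \<inter> set (take s (tl c)) \<noteq> {}"
      then obtain x where x: "x \<in> set (take (Suc z) p)" "x \<in> set (take s (tl c))" by blast
      from set_take_tl[OF x(2)] obtain i where "1 \<le> i" "i \<le> s" "x = c ! i" by blast
      then show False using A x(1) in_set_takeD by fastforce
    qed
    moreover have "distinct (take s (tl c))" using dc by (cases c) auto
    ultimately show ?thesis unfolding q1_def using dp by simp
  qed
  have d2: "distinct q2"
  proof -
    have "set (drop s c) \<inter> set (drop z p) = {}"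
    proof (rule ccontr)
      assume "set (drop s c) \<inter> set (drop z p) \<noteq> {}"
      then obtain x where x: "x \<in> set (drop s c)" "x \<in> set (drop z p)" by blast
      from set_drop_nth[OF x(1)] obtain i where i: "s \<le> i" "i < length c" "x = c ! i" by blast
      from set_drop_nth[OF x(2)] obtain j where j: "z \<le> j" "j < length p" "x = p ! j" by blast
      show False
      proof (cases "j = z")
        case True
        then have "c ! i = c ! 0" using i j cz by simp
        then have "i = 0" using dc i len n3 by (simp add: nth_eq_iff_index_eq)
        then show False using i s1 by simp
      next
        case False
        then have "z < j" using j by simp
        then have "p ! j \<notin> set c" using B j by blast
        moreover have "p ! j \<in> set c" using i j by (metis nth_mem)
        ultimately show False by blast
      qed
    qed
    then show ?thesis unfolding q2_def using dp dc by (auto simp: Int_commute)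
  qed
  have tc: "take (Suc s) c = c ! 0 # take s (tl c)" using cne by (cases c) auto
  have e1: "path_edges q1 = path_edges (take (Suc z) p) \<union> path_edges (take (Suc s) c)"
  proof -
    have ne: "take s (tl c) \<noteq> []" using s1 sn len by (cases c) auto
    have h1: "hd (take s (tl c)) = c ! 1" using ne by (cases c) (auto simp: hd_conv_nth)
    have l1: "last (take (Suc z) p) = p ! z" using zl by (simp add: take_Suc_conv_app_nth)
    have "path_edges q1 = path_edges (take (Suc z) p) \<union> path_edges (take s (tl c)) \<union> {{p ! z, c ! 1}}"
      unfolding q1_def pe_append using ne h1 l1 pne by simp
    moreover have "path_edges (take (Suc s) c) = insert {c ! 0, c ! 1} (path_edges (take s (tl c)))"
      unfolding tc using ne h1 by (simp add: pe_Cons)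
    ultimately show ?thesis using cz by auto
  qed
  have lastc: "last c = c ! (n - 1)" using cne len by (simp add: last_conv_nth)
  have e2: "path_edges q2 = path_edges (drop z p) \<union> path_edges (drop s c @ [c ! 0])"
  proof -
    have ne1: "drop s c \<noteq> []" using sn len by simp
    have ne2: "drop z p \<noteq> []" using zl by simp
    have h2: "hd (drop z p) = p ! z" using zl by (simp add: hd_drop_conv_nth)
    have l2: "last (drop s c) = c ! (n - 1)" using ne1 lastc by simp
    have "path_edges q2 = path_edges (drop s c) \<union> path_edges (drop z p) \<union> {{c ! (n - 1), p ! z}}"
      unfolding q2_def pe_rev pe_append using ne1 ne2 h2 l2 by simp
    moreover have "path_edges (drop s c @ [c ! 0]) = path_edges (drop s c) \<union> {{c ! (n - 1), c ! 0}}"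
      unfolding pe_append using ne1 l2 by simp
    ultimately show ?thesis using cz by auto
  qed
  have ce: "cycle_edges c = path_edges (take (Suc s) c) \<union> path_edges (drop s c @ [c ! 0])"
  proof -
    have "cycle_edges c = path_edges (c @ [c ! 0])" unfolding cycle_edges_def using cne by (simp add: hd_conv_nth)
    also have "\<dots> = path_edges (take (Suc s) (c @ [c ! 0])) \<union> path_edges (drop s (c @ [c ! 0]))"
      using pe_take_drop[of s "c @ [c ! 0]"] sn len by simp
    also have "take (Suc s) (c @ [c ! 0]) = take (Suc s) c" using sn len by simp
    also have "drop s (c @ [c ! 0]) = drop s c @ [c ! 0]" using sn len by simp
    finally show ?thesis .
  qed
  have pp: "path_edges p = path_edges (take (Suc z) p) \<union> path_edges (drop z p)"
    using pe_take_drop[OF zl] by simp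
  have union: "path_edges q1 \<union> path_edges q2 = cycle_edges c \<union> path_edges p"
    using e1 e2 ce pp by blast
  have lq1: "length q1 = Suc (z + s)" unfolding q1_def using zl sn len by (cases c) auto
  have lq2: "length q2 = (l - z) + (n - s) + 1" unfolding q2_def using zl sn len lp by simp
  have cardE: "card (cycle_edges c \<union> path_edges p) = n + l"
    using card_ce[OF cy] len card_pe[OF dp] lp disj
    by (simp add: card_Un_disjoint cycle_edges_def)
  have c1: "card (path_edges q1) = z + s" using card_pe[OF d1] lq1 by simp
  have c2: "card (path_edges q2) = (l - z) + (n - s)" using card_pe[OF d2] lq2 by simp
  have inter: "path_edges q1 \<inter> path_edges q2 = {}"
  proof -
    have "card (path_edges q1) + card (path_edges q2) =
        card (path_edges q1 \<union> path_edges q2) + card (path_edges q1 \<inter> path_edges q2)"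
      by (rule card_Un_Int) auto
    moreover have "z \<le> l" using zl lp by simp
    ultimately have "card (path_edges q1 \<inter> path_edges q2) = 0"
      using c1 c2 union cardE sn by simp
    then show ?thesis by simp
  qed
  have hq1: "hd q1 = hd p" unfolding q1_def using pne by simp
  have lq1e: "last q1 = c ! s"
  proof -
    have ne: "take s (tl c) \<noteq> []" using s1 sn len by (cases c) auto
    then have "last q1 = last (take s (tl c))" unfolding q1_def by simp
    also have "\<dots> = tl c ! (s - 1)" using ne s1 sn len by (simp add: last_conv_nth)
    also have "\<dots> = c ! s" using s1 cne by (cases c) auto
    finally show ?thesis .
  qed
  have hq2: "hd q2 = last p" unfolding q2_def using zl by (simp add: hd_rev)
  have lq2e: "last q2 = c ! s" unfolding q2_def using sn len by (simp add: last_rev hd_drop_conv_nth)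
  have hl: "hd p \<noteq> last p"
  proof
    assume "hd p = last p"
    have "hd p = p ! 0" using pne by (simp add: hd_conv_nth)
    moreover have "last p = p ! (length p - 1)" using pne by (simp add: last_conv_nth)
    ultimately have "0 = length p - 1" using \<open>hd p = last p\<close> dp pne by (simp add: nth_eq_iff_index_eq)
    then show False using z0 zl by simp
  qed
  have cs1: "c ! s \<noteq> hd p" "c ! s \<noteq> last p" using csin hp lpc by auto
  have k1: "card ({hd q1, last q1} \<inter> {hd p, last p}) = 1"
    unfolding hq1 lq1e using cs1 hl by (simp add: Int_insert_left)
  have k2: "card ({hd q2, last q2} \<inter> {hd p, last p}) = 1"
    unfolding hq2 lq2e using cs1 hl by (simp add: Int_insert_left)
  have pl1: "path_len q1 \<in> {n, l}" using lq1 zs unfolding path_len_def by auto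
  have pl2: "path_len q2 \<in> {n, l}" using lq2 zs zl lp sn unfolding path_len_def by auto
  have ne: "q1 \<noteq> []" "q2 \<noteq> []" using lq1 lq2 by auto
  show ?thesis unfolding good_def is_path_def
    using d1 d2 union inter pl1 pl2 k1 k2 ne by blast
qed

lemma rot_exists:
  assumes "is_cycle c" "length c = n" "i < n"
  shows "\<exists>c'. is_cycle c' \<and> length c' = n \<and> set c' = set c \<and> cycle_edges c' = cycle_edges c
     \<and> (\<forall>j<n. c' ! j = c ! ((i + j) mod n))"
  using assms by (intro exI[of _ "rotate i c"]) (auto simp: is_cycle_def ce_rotate nth_rotate)

lemma refl_props:
  assumes "is_cycle c" "length c = n"
  shows "is_cycle (refl c) \<and> length (refl c) = n \<and> set (refl c) = set c
     \<and> cycle_edges (refl c) = cycle_edges c \<and> refl c ! 0 = c ! 0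
     \<and> (\<forall>j. 0 < j \<and> j < n \<longrightarrow> refl c ! j = c ! (n - j))"
proof -
  have "c \<noteq> []" using assms by (auto simp: is_cycle_def)
  then show ?thesis using assms by (auto simp: is_cycle_def ce_refl refl_nth0 refl_nth)
qed

definition cfg :: "nat \<Rightarrow> nat \<Rightarrow> 'a list \<Rightarrow> 'a list \<Rightarrow> bool" where
  "cfg k l c p \<longleftrightarrow> k \<ge> 3 \<and> is_cycle c \<and> length c = 2 * k
    \<and> is_path p \<and> path_len p = l \<and> l \<in> {2 * k - 1, 2 * k, 2 * k + 1}
    \<and> cycle_edges c \<inter> path_edges p = {}
    \<and> set c \<inter> set p \<noteq> {}
    \<and> hd p \<notin> set c \<and> last p \<notin> set c
    \<and> girth_at_least (cycle_edges c \<union> path_edges p) (2 * k - 2)"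

definition islast :: "'a list \<Rightarrow> 'a list \<Rightarrow> nat \<Rightarrow> bool" where
  "islast c p z \<longleftrightarrow> z < length p \<and> p ! z \<in> set c \<and> (\<forall>j. z < j \<and> j < length p \<longrightarrow> p ! j \<notin> set c)"

definition FD :: "nat \<Rightarrow> nat \<Rightarrow> 'a list \<Rightarrow> 'a list \<Rightarrow> nat \<Rightarrow> nat \<Rightarrow> nat \<Rightarrow> bool" where
  "FD k l c p z e pos \<longleftrightarrow> 1 \<le> e \<and> e < 2 * k
     \<and> (\<forall>s. 1 \<le> s \<and> s < 2 * k \<and> (z + s = 2 * k \<or> z + s = l) \<longrightarrow> e \<le> s)
     \<and> c ! e = p ! pos \<and> pos < z \<and> 2 * k - 2 \<le> z - pos + e
     \<and> (\<forall>i. 1 \<le> i \<and> i < e \<longrightarrow> c ! i \<notin> set p)"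

lemma cfg_facts:
  assumes "cfg k l c p"
  shows "distinct p" "length p = Suc l" "p ! 0 \<notin> set c" "p ! l \<notin> set c" "distinct c" "length c = 2 * k"
    "2 * k - 1 \<le> l" "l \<le> 2 * k + 1" "k \<ge> 3" "p \<noteq> []"
proof -
  have pne: "p \<noteq> []" using assms by (auto simp: cfg_def is_path_def)
  have lp: "length p = Suc l" using assms pne by (auto simp: cfg_def path_len_def)
  show "distinct p" "length p = Suc l" "distinct c" "length c = 2 * k"
    "2 * k - 1 \<le> l" "l \<le> 2 * k + 1" "k \<ge> 3" "p \<noteq> []"
    using assms lp pne by (auto simp: cfg_def is_path_def is_cycle_def)
  show "p ! 0 \<notin> set c" using assms pne by (auto simp: cfg_def hd_conv_nth)
  show "p ! l \<notin> set c" using assms pne lp by (auto simp: cfg_def last_conv_nth)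
qed

lemma os:
  assumes cf: "cfg k l c p" and zl: "islast c p z"
    and cy': "is_cycle c'" and len': "length c' = 2 * k" and set': "set c' = set c"
    and ce': "cycle_edges c' = cycle_edges c" and c0: "c' ! 0 = p ! z"
  shows "good (2 * k) l (cycle_edges c \<union> path_edges p) p \<or> (\<exists>e pos. FD k l c' p z e pos)"
proof -
  note f = cfg_facts[OF cf]
  define n where "n = 2 * k"
  have n6: "6 \<le> n" using f unfolding n_def by simp
  have zlen: "z < length p" and zc: "p ! z \<in> set c"
    and zmax: "\<forall>j. z < j \<and> j < length p \<longrightarrow> p ! j \<notin> set c" using zl by (auto simp: islast_def)
  have z0: "z \<noteq> 0" using zc f(3) by (metis)
  have zl1: "z < l" using zlen f zc by (metis less_Suc_eq)
  have disj: "cycle_edges c' \<inter> path_edges p = {}" using cf ce' by (simp add: cfg_def)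
  show ?thesis
  proof (cases "\<exists>s. 1 \<le> s \<and> s < n \<and> (z + s = n \<or> z + s = l) \<and> (\<forall>i. 1 \<le> i \<and> i \<le> s \<longrightarrow> c' ! i \<notin> set p)")
    case True
    then obtain s where s: "1 \<le> s" "s < n" "z + s = n \<or> z + s = l"
      "\<forall>i. 1 \<le> i \<and> i \<le> s \<longrightarrow> c' ! i \<notin> set p" by blast
    have "good n l (cycle_edges c' \<union> path_edges p) p"
    proof (rule cl[OF cy' _ f(1) f(2) zlen c0 s(1) s(2) s(3) s(4)])
      show "length c' = n" using len' n_def by simp
      show "\<forall>j. z < j \<and> j < length p \<longrightarrow> p ! j \<notin> set c'" using zmax set' by simp
      show "hd p \<notin> set c'" "last p \<notin> set c'" using cf set' by (auto simp: cfg_def)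
      show "cycle_edges c' \<inter> path_edges p = {}" by (rule disj)
    qed
    then show ?thesis using ce' n_def by simp
  next
    case False
    then have F: "\<forall>s. 1 \<le> s \<and> s < n \<and> (z + s = n \<or> z + s = l) \<longrightarrow> (\<exists>i. 1 \<le> i \<and> i \<le> s \<and> c' ! i \<in> set p)"
      by blast
    obtain s0 where s0: "1 \<le> s0" "s0 < n" "z + s0 = n \<or> z + s0 = l"
    proof (cases "l - z < n")
      case True then show ?thesis using that[of "l - z"] zl1 by simp
    next
      case False
      then have "z = 1" using z0 f zl1 unfolding n_def by simp
      then show ?thesis using that[of "n - 1"] n6 by simp
    qed
    then obtain i0 where i0: "1 \<le> i0" "i0 \<le> s0" "c' ! i0 \<in> set p" using F by blast
    define e where "e = (LEAST i. 1 \<le> i \<and> c' ! i \<in> set p)"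
    have e1: "1 \<le> e" and ep: "c' ! e \<in> set p" and ei0: "e \<le> i0"
      using LeastI[of "\<lambda>i. 1 \<le> i \<and> c' ! i \<in> set p" i0] Least_le[of "\<lambda>i. 1 \<le> i \<and> c' ! i \<in> set p" i0] i0
      unfolding e_def by auto
    have emin: "\<forall>i. 1 \<le> i \<and> i < e \<longrightarrow> c' ! i \<notin> set p"
      using not_less_Least[of _ "\<lambda>i. 1 \<le> i \<and> c' ! i \<in> set p"] unfolding e_def by blast
    have en: "e < n" using ei0 i0 s0 by simp
    have evalid: "\<forall>s. 1 \<le> s \<and> s < n \<and> (z + s = n \<or> z + s = l) \<longrightarrow> e \<le> s"
    proof (intro allI impI)
      fix s assume "1 \<le> s \<and> s < n \<and> (z + s = n \<or> z + s = l)"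
      then obtain i where "1 \<le> i" "i \<le> s" "c' ! i \<in> set p" using F by blast
      then show "e \<le> s" using emin by (meson le_trans not_le)
    qed
    obtain pos where pos: "pos < length p" "p ! pos = c' ! e" using ep by (metis in_set_conv_nth)
    have dc': "distinct c'" using cy' by (simp add: is_cycle_def)
    have "c' ! e \<noteq> c' ! 0" using dc' en e1 len' n_def by (simp add: nth_eq_iff_index_eq)
    then have "pos \<noteq> z" using pos c0 by auto
    moreover have "\<not> z < pos"
    proof
      assume "z < pos"
      have "c' ! e \<in> set c'" using en len' n_def by simp
      then show False using zmax pos set' \<open>z < pos\<close> by auto
    qed
    ultimately have posz: "pos < z" by simp
    define q where "q = drop pos (take (Suc z) p)"
    have lq: "length q = Suc z - pos" unfolding q_def using zlen by simp
    have qne: "q \<noteq> []" using lq posz by (metis Suc_diff_le le_eq_less_or_eq list.size(3) nat.distinct(1))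
    have hq: "hd q = c' ! e" unfolding q_def using posz zlen pos by (simp add: hd_drop_conv_nth)
    have lq': "last q = c' ! 0" unfolding q_def using posz zlen c0
      by (simp add: take_Suc_conv_app_nth)
    have dq: "distinct q" unfolding q_def using f(1) by (simp add: distinct_drop distinct_take)
    have qsub: "set q \<subseteq> set p" unfolding q_def by (meson in_set_dropD in_set_takeD subsetI)
    have Hsub: "path_edges q \<subseteq> cycle_edges c' \<union> path_edges p" unfolding q_def using pe_seg_sub by blast
    have gir: "girth_at_least (cycle_edges c' \<union> path_edges p) (2 * k - 2)" using cf ce' by (simp add: cfg_def)
    have "2 * k - 2 \<le> length q - 1 + e"
    proof (rule gcl[OF cy' _ _ gir dq qne hq lq' e1])
      show "length c' = n" using len' n_def by simp
      show "e < n" by (rule en)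
      show "cycle_edges c' \<subseteq> cycle_edges c' \<union> path_edges p" by blast
      show "\<forall>i. 1 \<le> i \<and> i < e \<longrightarrow> c' ! i \<notin> set q" using emin qsub by blast
      show "path_edges q \<subseteq> cycle_edges c' \<union> path_edges p" by (rule Hsub)
      show "path_edges q \<inter> cycle_edges c' = {}" using disj pe_seg_sub[of pos "Suc z" p] unfolding q_def by blast
    qed
    then have "FD k l c' p z e pos" unfolding FD_def using e1 en evalid pos posz emin lq n_def by auto
    then show ?thesis by blast
  qed
qed

lemma seg_mem: "x \<in> set (drop j (take (Suc j') p)) \<Longrightarrow> j' < length p \<Longrightarrow> \<exists>m. j \<le> m \<and> m \<le> j' \<and> x = p ! m"
proof -
  assume x: "x \<in> set (drop j (take (Suc j') p))" and j': "j' < length p"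
  from set_drop_nth[OF x] obtain i where i: "j \<le> i" "i < length (take (Suc j') p)" "x = take (Suc j') p ! i"
    by blast
  then show ?thesis using j' by (intro exI[of _ i]) auto
qed

lemma seg_gen:
  assumes cf: "cfg k l c p" and cy1: "is_cycle c1" and len1: "length c1 = 2 * k"
    and ce1: "cycle_edges c1 = cycle_edges c"
    and q: "q = drop j (take (Suc j') p) \<or> q = rev (drop j (take (Suc j') p))"
    and jj: "j < j'" "j' < length p"
    and hq: "hd q = c1 ! e" and lq: "last q = c1 ! 0" and e1: "1 \<le> e" and en: "e < 2 * k"
    and inter: "\<forall>i. 1 \<le> i \<and> i < e \<longrightarrow> c1 ! i \<notin> set (drop j (take (Suc j') p))"
  shows "2 * k - 2 \<le> j' - j + e"
proof -
  note f = cfg_facts[OF cf]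
  define sg where "sg = drop j (take (Suc j') p)"
  have lsg: "length sg = Suc j' - j" unfolding sg_def using jj by simp
  have lq': "length q = Suc j' - j" using q lsg unfolding sg_def by auto
  have qne: "q \<noteq> []" using lq' jj by auto
  have dq: "distinct q" using q f(1) by (auto simp: distinct_drop distinct_take)
  have sq: "set q = set sg" using q unfolding sg_def by auto
  have peq: "path_edges q = path_edges sg" using q unfolding sg_def by auto
  have gir: "girth_at_least (cycle_edges c1 \<union> path_edges p) (2 * k - 2)" using cf ce1 by (simp add: cfg_def)
  have disj: "cycle_edges c1 \<inter> path_edges p = {}" using cf ce1 by (simp add: cfg_def)
  have "2 * k - 2 \<le> length q - 1 + e"
  proof (rule gcl[OF cy1 len1 _ gir dq qne hq lq e1 en])
    show "cycle_edges c1 \<subseteq> cycle_edges c1 \<union> path_edges p" by blast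
    show "\<forall>i. 1 \<le> i \<and> i < e \<longrightarrow> c1 ! i \<notin> set q" using inter sq unfolding sg_def by blast
    show "path_edges q \<subseteq> cycle_edges c1 \<union> path_edges p" using peq pe_seg_sub unfolding sg_def by blast
    show "path_edges q \<inter> cycle_edges c1 = {}" using peq pe_seg_sub[of j "Suc j'" p] disj unfolding sg_def by blast
  qed
  then show ?thesis using lq' jj by simp
qed

lemma seg1:
  assumes cf: "cfg k l c p" and cy1: "is_cycle c1" and len1: "length c1 = 2 * k"
    and ce1: "cycle_edges c1 = cycle_edges c"
    and jj: "j < j'" "j' < length p"
    and hq: "p ! j = c1 ! e" and lq: "p ! j' = c1 ! 0" and e1: "1 \<le> e" and en: "e < 2 * k"
    and inter: "\<forall>i. 1 \<le> i \<and> i < e \<longrightarrow> c1 ! i \<notin> set (drop j (take (Suc j') p))"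
  shows "2 * k - 2 \<le> j' - j + e"
proof (rule seg_gen[OF cf cy1 len1 ce1 _ jj _ _ e1 en inter])
  show "drop j (take (Suc j') p) = drop j (take (Suc j') p) \<or> drop j (take (Suc j') p) = rev (drop j (take (Suc j') p))" by simp
  show "hd (drop j (take (Suc j') p)) = c1 ! e" using jj hq by (simp add: hd_drop_conv_nth)
  show "last (drop j (take (Suc j') p)) = c1 ! 0" using jj lq by (simp add: take_Suc_conv_app_nth)
qed

lemma seg2:
  assumes cf: "cfg k l c p" and cy1: "is_cycle c1" and len1: "length c1 = 2 * k"
    and ce1: "cycle_edges c1 = cycle_edges c"
    and jj: "j < j'" "j' < length p"
    and hq: "p ! j' = c1 ! e" and lq: "p ! j = c1 ! 0" and e1: "1 \<le> e" and en: "e < 2 * k"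
    and inter: "\<forall>i. 1 \<le> i \<and> i < e \<longrightarrow> c1 ! i \<notin> set (drop j (take (Suc j') p))"
  shows "2 * k - 2 \<le> j' - j + e"
proof (rule seg_gen[OF cf cy1 len1 ce1 _ jj _ _ e1 en inter])
  show "rev (drop j (take (Suc j') p)) = drop j (take (Suc j') p) \<or> rev (drop j (take (Suc j') p)) = rev (drop j (take (Suc j') p))" by simp
  show "hd (rev (drop j (take (Suc j') p))) = c1 ! e" using jj hq by (simp add: hd_rev take_Suc_conv_app_nth)
  show "last (rev (drop j (take (Suc j') p))) = c1 ! 0" using jj lq by (simp add: last_rev hd_drop_conv_nth)
qed

lemma idx_of: "x \<in> set c \<Longrightarrow> \<exists>i < length c. c ! i = x"
  by (metis in_set_conv_nth)

lemma cons_lemma: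
  assumes cf: "cfg k l c p" and jj: "j < j'" "j' < length p"
    and h1: "p ! j \<in> set c" and h2: "p ! j' \<in> set c"
    and nb: "\<forall>i. j < i \<and> i < j' \<longrightarrow> p ! i \<notin> set c"
  shows "k \<le> j' - j + 2"
proof -
  note f = cfg_facts[OF cf]
  define n where "n = 2 * k"
  have cy: "is_cycle c" using cf by (simp add: cfg_def)
  obtain a where a: "a < n" "c ! a = p ! j'" using idx_of[OF h2] f n_def by auto
  obtain c1 where c1: "is_cycle c1" "length c1 = n" "set c1 = set c" "cycle_edges c1 = cycle_edges c"
      "\<forall>m<n. c1 ! m = c ! ((a + m) mod n)"
    using rot_exists[OF cy _ a(1)] f n_def by auto
  have c10: "c1 ! 0 = p ! j'" using c1(5) a n_def f by auto
  obtain e where e: "e < n" "c1 ! e = p ! j" using idx_of[of "p ! j" c1] h1 c1 by auto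
  have dc1: "distinct c1" using c1 by (simp add: is_cycle_def)
  have dp: "distinct p" using f by simp
  have neq: "p ! j \<noteq> p ! j'" using dp jj by (simp add: nth_eq_iff_index_eq)
  have e0: "e \<noteq> 0"
  proof
    assume "e = 0"
    then show False using e(2) c10 neq by simp
  qed
  have inter_gen: "\<And>d. d < n \<Longrightarrow> d \<noteq> 0 \<Longrightarrow> d \<noteq> e \<Longrightarrow> c1 ! d \<notin> set (drop j (take (Suc j') p))"
  proof
    fix d assume d: "d < n" "d \<noteq> 0" "d \<noteq> e" and "c1 ! d \<in> set (drop j (take (Suc j') p))"
    obtain m where m: "j \<le> m" "m \<le> j'" "c1 ! d = p ! m"
      using seg_mem[OF \<open>c1 ! d \<in> set (drop j (take (Suc j') p))\<close> jj(2)] by blast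
    have "c1 ! d \<in> set c1" using d c1(2) by simp
    then have "c1 ! d \<in> set c" using c1(3) by simp
    then have "\<not> (j < m \<and> m < j')" using nb m(3) by metis
    then have "m = j \<or> m = j'" using m by linarith
    then have "c1 ! d = c1 ! e \<or> c1 ! d = c1 ! 0" using m(3) e(2) c10 by auto
    then show False using d e(1) dc1 c1(2) by (auto simp: nth_eq_iff_index_eq)
  qed
  have A: "2 * k - 2 \<le> j' - j + e"
  proof (rule seg1[OF cf c1(1) _ c1(4) jj])
    show "length c1 = 2 * k" using c1 n_def by simp
    show "p ! j = c1 ! e" using e by simp
    show "p ! j' = c1 ! 0" using c10 by simp
    show "1 \<le> e" using e0 by simp
    show "e < 2 * k" using e n_def by simp
    show "\<forall>i. 1 \<le> i \<and> i < e \<longrightarrow> c1 ! i \<notin> set (drop j (take (Suc j') p))"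
      using inter_gen e by auto
  qed
  have r: "is_cycle (refl c1) \<and> length (refl c1) = n \<and> set (refl c1) = set c1
     \<and> cycle_edges (refl c1) = cycle_edges c1 \<and> refl c1 ! 0 = c1 ! 0
     \<and> (\<forall>m. 0 < m \<and> m < n \<longrightarrow> refl c1 ! m = c1 ! (n - m))" using refl_props[OF c1(1) c1(2)] .
  have B: "2 * k - 2 \<le> j' - j + (n - e)"
  proof (rule seg1[OF cf _ _ _ jj])
    show "is_cycle (refl c1)" "length (refl c1) = 2 * k" "cycle_edges (refl c1) = cycle_edges c"
      using r c1 n_def by auto
    show "p ! j = refl c1 ! (n - e)" using r e e0 by auto
    show "p ! j' = refl c1 ! 0" using r c10 by simp
    show "1 \<le> n - e" "n - e < 2 * k" using e e0 n_def by auto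
    show "\<forall>i. 1 \<le> i \<and> i < n - e \<longrightarrow> refl c1 ! i \<notin> set (drop j (take (Suc j') p))"
    proof (intro allI impI)
      fix i assume i: "1 \<le> i \<and> i < n - e"
      then have "refl c1 ! i = c1 ! (n - i)" using r by auto
      moreover have "n - i < n" "n - i \<noteq> 0" "n - i \<noteq> e" using i e by auto
      ultimately show "refl c1 ! i \<notin> set (drop j (take (Suc j') p))" using inter_gen by simp
    qed
  qed
  show ?thesis using A B e n_def by simp
qed

lemma islast_ex: "cfg k l c p \<Longrightarrow> \<exists>z. islast c p z"
proof -
  assume cf: "cfg k l c p"
  define S where "S = {i. i < length p \<and> p ! i \<in> set c}"
  have fin: "finite S" unfolding S_def by simp
  have "set c \<inter> set p \<noteq> {}" using cf unfolding cfg_def by blast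
  then obtain x where x: "x \<in> set c" "x \<in> set p" by blast
  from x(2) obtain i where i: "i < length p" "p ! i = x" by (auto simp: in_set_conv_nth)
  have "i \<in> S" unfolding S_def using i x(1) by simp
  then have ne: "S \<noteq> {}" by blast
  have M: "Max S \<in> S" using Max_in[OF fin ne] .
  have "\<forall>j. Max S < j \<and> j < length p \<longrightarrow> p ! j \<notin> set c"
  proof (intro allI impI)
    fix j assume j: "Max S < j \<and> j < length p"
    show "p ! j \<notin> set c"
    proof
      assume "p ! j \<in> set c"
      then have "j \<in> S" using j unfolding S_def by simp
      then have "j \<le> Max S" using Max_ge[OF fin] by simp
      then show False using j by simp
    qed
  qed
  moreover have "Max S < length p \<and> p ! Max S \<in> set c" using M unfolding S_def by blast
  ultimately have "islast c p (Max S)" unfolding islast_def by blast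
  then show ?thesis by blast
qed

lemma cfg_rev: "cfg k l c p \<Longrightarrow> cfg k l c (rev p)"
proof -
  assume cf: "cfg k l c p"
  then have pne: "p \<noteq> []" by (simp add: cfg_def is_path_def)
  have "is_path (rev p)" "path_len (rev p) = path_len p" "path_edges (rev p) = path_edges p"
    "set (rev p) = set p" "hd (rev p) = last p" "last (rev p) = hd p"
    using cf pne by (simp_all add: cfg_def is_path_def path_len_def hd_rev last_rev)
  then show ?thesis using cf unfolding cfg_def by simp
qed

lemma good_rev: "p \<noteq> [] \<Longrightarrow> good N l E (rev p) = good N l E p"
proof -
  assume "p \<noteq> []"
  then have "{hd (rev p), last (rev p)} = {hd p, last p}" by (auto simp: hd_rev last_rev)
  then show ?thesis unfolding good_def by simp
qed

definition SD :: "nat \<Rightarrow> nat \<Rightarrow> 'a list \<Rightarrow> 'a list \<Rightarrow> nat \<Rightarrow> 'a list \<Rightarrow> nat \<Rightarrow> nat \<Rightarrow> nat \<Rightarrow> nat \<Rightarrow> bool" where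
  "SD k l c p z c' e1 e2 pos1 pos2 \<longleftrightarrow> is_cycle c' \<and> length c' = 2 * k \<and> set c' = set c
     \<and> cycle_edges c' = cycle_edges c \<and> c' ! 0 = p ! z
     \<and> FD k l c' p z e1 pos1 \<and> FD k l (refl c') p z e2 pos2
     \<and> ((pos1 = pos2 \<and> e1 + e2 = 2 * k) \<or> (pos1 \<noteq> pos2 \<and> e1 + e2 < 2 * k))"

lemma side:
  assumes cf: "cfg k l c p" and zl: "islast c p z"
  shows "good (2 * k) l (cycle_edges c \<union> path_edges p) p \<or> (\<exists>c' e1 e2 pos1 pos2. SD k l c p z c' e1 e2 pos1 pos2)"
proof -
  note f = cfg_facts[OF cf]
  define n where "n = 2 * k"
  have cy: "is_cycle c" using cf by (simp add: cfg_def)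
  have zc: "p ! z \<in> set c" using zl by (simp add: islast_def)
  obtain a where a: "a < n" "c ! a = p ! z" using idx_of[OF zc] f n_def by auto
  obtain c1 where c1: "is_cycle c1" "length c1 = n" "set c1 = set c" "cycle_edges c1 = cycle_edges c"
      "\<forall>m<n. c1 ! m = c ! ((a + m) mod n)"
    using rot_exists[OF cy _ a(1)] f n_def by auto
  have c10: "c1 ! 0 = p ! z" using c1(5) a n_def f by auto
  have r: "is_cycle (refl c1) \<and> length (refl c1) = n \<and> set (refl c1) = set c1
     \<and> cycle_edges (refl c1) = cycle_edges c1 \<and> refl c1 ! 0 = c1 ! 0
     \<and> (\<forall>m. 0 < m \<and> m < n \<longrightarrow> refl c1 ! m = c1 ! (n - m))" using refl_props[OF c1(1) c1(2)] .
  have o1: "good (2 * k) l (cycle_edges c \<union> path_edges p) p \<or> (\<exists>e pos. FD k l c1 p z e pos)"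
    using os[OF cf zl c1(1) _ c1(3) c1(4) c10] c1(2) n_def by simp
  have o2: "good (2 * k) l (cycle_edges c \<union> path_edges p) p \<or> (\<exists>e pos. FD k l (refl c1) p z e pos)"
    using os[OF cf zl, of "refl c1"] r c1 c10 n_def by simp
  show ?thesis
  proof (cases "good (2 * k) l (cycle_edges c \<union> path_edges p) p")
    case True then show ?thesis by simp
  next
    case False
    then obtain e1 pos1 e2 pos2 where F1: "FD k l c1 p z e1 pos1" and F2: "FD k l (refl c1) p z e2 pos2"
      using o1 o2 by blast
    have e1: "1 \<le> e1" "e1 < n" "c1 ! e1 = p ! pos1" "\<forall>i. 1 \<le> i \<and> i < e1 \<longrightarrow> c1 ! i \<notin> set p"
      "pos1 < z" using F1 unfolding FD_def n_def by auto
    have e2: "1 \<le> e2" "e2 < n" "refl c1 ! e2 = p ! pos2" "pos2 < z" using F2 unfolding FD_def n_def by auto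
    have w2: "c1 ! (n - e2) = p ! pos2" using e2 r by auto
    have zlen: "z < length p" using zl by (simp add: islast_def)
    have "c1 ! (n - e2) \<in> set p" using w2 e2 zlen by simp
    have le: "e1 \<le> n - e2"
    proof (rule ccontr)
      assume "\<not> e1 \<le> n - e2"
      then have "1 \<le> n - e2 \<and> n - e2 < e1" using e2 by simp
      then have "c1 ! (n - e2) \<notin> set p" using e1(4) by blast
      then show False using \<open>c1 ! (n - e2) \<in> set p\<close> by blast
    qed
    have dc1: "distinct c1" using c1 by (simp add: is_cycle_def)
    have dp: "distinct p" using f by simp
    have rel: "(pos1 = pos2 \<and> e1 + e2 = n) \<or> (pos1 \<noteq> pos2 \<and> e1 + e2 < n)"
    proof (cases "e1 = n - e2")
      case True
      then have "p ! pos1 = p ! pos2" using e1(3) w2 by simp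
      then have "pos1 = pos2" using dp e1(5) e2(4) zlen by (simp add: nth_eq_iff_index_eq)
      then show ?thesis using True e2 by simp
    next
      case False
      then have lt: "e1 < n - e2" using le by simp
      have "n - e2 < n" using e2 by simp
      then have "c1 ! e1 \<noteq> c1 ! (n - e2)" using dc1 lt e1(2) c1(2) by (simp add: nth_eq_iff_index_eq)
      then have "pos1 \<noteq> pos2" using e1(3) w2 by auto
      then show ?thesis using lt by simp
    qed
    have l1: "length c1 = 2 * k" using c1(2) n_def by simp
    have rel': "(pos1 = pos2 \<and> e1 + e2 = 2 * k) \<or> (pos1 \<noteq> pos2 \<and> e1 + e2 < 2 * k)"
      using rel n_def by simp
    have "SD k l c p z c1 e1 e2 pos1 pos2" unfolding SD_def
      using c1(1) l1 c1(3) c1(4) c10 F1 F2 rel' by blast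
    then show ?thesis by blast
  qed
qed

lemma SD_facts:
  assumes cf: "cfg k l c p" and zl: "islast c p z" and sd: "SD k l c p z c' e1 e2 pos1 pos2"
  shows "is_cycle c'" "length c' = 2 * k" "set c' = set c" "cycle_edges c' = cycle_edges c" "c' ! 0 = p ! z"
    "1 \<le> e1" "e1 < 2 * k" "1 \<le> e2" "e2 < 2 * k"
    "\<forall>s. 1 \<le> s \<and> s < 2 * k \<and> (z + s = 2 * k \<or> z + s = l) \<longrightarrow> e1 \<le> s"
    "\<forall>s. 1 \<le> s \<and> s < 2 * k \<and> (z + s = 2 * k \<or> z + s = l) \<longrightarrow> e2 \<le> s"
    "c' ! e1 = p ! pos1" "c' ! (2 * k - e2) = p ! pos2"
    "pos1 < z" "pos2 < z" "2 * k - 2 \<le> z - pos1 + e1" "2 * k - 2 \<le> z - pos2 + e2"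
    "\<forall>i. 1 \<le> i \<and> i < e1 \<longrightarrow> c' ! i \<notin> set p"
    "\<forall>i. 2 * k - e2 < i \<and> i < 2 * k \<longrightarrow> c' ! i \<notin> set p"
    "(pos1 = pos2 \<and> e1 + e2 = 2 * k) \<or> (pos1 \<noteq> pos2 \<and> e1 + e2 < 2 * k)"
    "z < l" "1 \<le> z" "1 \<le> pos1" "1 \<le> pos2" "p ! pos1 \<in> set c" "p ! pos2 \<in> set c"
proof -
  note f = cfg_facts[OF cf]
  have cy: "is_cycle c'" "length c' = 2 * k" using sd by (auto simp: SD_def)
  note r = refl_props[OF cy]
  have F1: "FD k l c' p z e1 pos1" and F2: "FD k l (refl c') p z e2 pos2" using sd by (auto simp: SD_def)
  show "is_cycle c'" "length c' = 2 * k" "set c' = set c" "cycle_edges c' = cycle_edges c" "c' ! 0 = p ! z"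
    "(pos1 = pos2 \<and> e1 + e2 = 2 * k) \<or> (pos1 \<noteq> pos2 \<and> e1 + e2 < 2 * k)"
    using sd by (auto simp: SD_def)
  show "1 \<le> e1" "e1 < 2 * k" "\<forall>s. 1 \<le> s \<and> s < 2 * k \<and> (z + s = 2 * k \<or> z + s = l) \<longrightarrow> e1 \<le> s"
    "c' ! e1 = p ! pos1" "pos1 < z" "2 * k - 2 \<le> z - pos1 + e1" "\<forall>i. 1 \<le> i \<and> i < e1 \<longrightarrow> c' ! i \<notin> set p"
    using F1 unfolding FD_def by auto
  show e2: "1 \<le> e2" "e2 < 2 * k" "\<forall>s. 1 \<le> s \<and> s < 2 * k \<and> (z + s = 2 * k \<or> z + s = l) \<longrightarrow> e2 \<le> s"
    "pos2 < z" "2 * k - 2 \<le> z - pos2 + e2"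
    using F2 unfolding FD_def by auto
  have "refl c' ! e2 = p ! pos2" using F2 unfolding FD_def by auto
  then show "c' ! (2 * k - e2) = p ! pos2" using r e2 by auto
  show "\<forall>i. 2 * k - e2 < i \<and> i < 2 * k \<longrightarrow> c' ! i \<notin> set p"
  proof (intro allI impI)
    fix i assume i: "2 * k - e2 < i \<and> i < 2 * k"
    have "refl c' ! (2 * k - i) = c' ! (2 * k - (2 * k - i))" using r i by auto
    also have "\<dots> = c' ! i" using i by simp
    finally have "refl c' ! (2 * k - i) = c' ! i" .
    moreover have "1 \<le> 2 * k - i \<and> 2 * k - i < e2" using i by auto
    ultimately show "c' ! i \<notin> set p" using F2 unfolding FD_def by metis
  qed
  have zlen: "z < length p" "p ! z \<in> set c" using zl by (auto simp: islast_def)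
  show "1 \<le> z" using zlen f(3) by (cases z) auto
  show "z < l" using zlen f by (metis less_Suc_eq)
  have "pos1 < z" "pos2 < z" using F1 F2 unfolding FD_def by auto
  have s1: "c' ! e1 \<in> set c" using cy sd \<open>e1 < 2 * k\<close> unfolding SD_def by (metis nth_mem)
  have "2 * k - e2 < length c'" using cy(2) e2(1) e2(2) by simp
  then have s2: "c' ! (2 * k - e2) \<in> set c" using sd unfolding SD_def by (metis nth_mem)
  show "p ! pos1 \<in> set c" using s1 \<open>c' ! e1 = p ! pos1\<close> by simp
  show "p ! pos2 \<in> set c" using s2 \<open>c' ! (2 * k - e2) = p ! pos2\<close> by simp
  show "1 \<le> pos1" using \<open>p ! pos1 \<in> set c\<close> f(3) by (cases pos1) auto
  show "1 \<le> pos2" using \<open>p ! pos2 \<in> set c\<close> f(3) by (cases pos2) auto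
qed

lemma k4_case:
  assumes cf: "cfg k l c p" and k4: "4 \<le> k" and zl: "islast c p z"
    and sd: "SD k l c p z c' e1 e2 pos1 pos2" and ne: "pos1 \<noteq> pos2"
  shows False
proof -
  note f = cfg_facts[OF cf]
  note S = SD_facts[OF cf zl sd]
  define n where "n = 2 * k"
  have zlen: "z < length p" using zl by (simp add: islast_def)
  have bndA: "z < n \<Longrightarrow> pos1 \<le> 2 \<and> pos2 \<le> 2"
  proof -
    assume zn: "z < n"
    have v: "1 \<le> n - z \<and> n - z < 2 * k \<and> (z + (n - z) = 2 * k \<or> z + (n - z) = l)"
      using zn S(22) n_def by auto
    have "e1 \<le> n - z" "e2 \<le> n - z" using S(10) S(11) v by blast+
    then show "pos1 \<le> 2 \<and> pos2 \<le> 2" using S(16) S(17) S(14) S(15) zn n_def by linarith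
  qed
  have bndB: "n \<le> z \<Longrightarrow> z = n \<and> l = n + 1 \<and> e1 = 1 \<and> e2 = 1"
  proof -
    assume zn: "n \<le> z"
    then have zn': "z = n" "l = n + 1" using S(21) f(7) f(8) n_def by linarith+
    have v: "1 \<le> (1::nat) \<and> 1 < 2 * k \<and> (z + 1 = 2 * k \<or> z + 1 = l)" using zn' n_def f by simp
    have "e1 = 1" "e2 = 1" using S(10) S(11) v S(6) S(8) by (metis le_antisym)+
    then show ?thesis using zn' by simp
  qed
  have bnd: "(z < n \<longrightarrow> pos1 \<le> 2 \<and> pos2 \<le> 2) \<and> (n \<le> z \<longrightarrow> z = n \<and> l = n + 1 \<and> e1 = 1 \<and> e2 = 1)"
    using bndA bndB by blast
  have p3: "pos1 \<le> 3" "pos2 \<le> 3"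
  proof -
    show "pos1 \<le> 3"
    proof (cases "z < n")
      case True then show ?thesis using bnd by simp
    next
      case False
      then have "z = n" "e1 = 1" using bnd by auto
      then show ?thesis using S(16) S(14) n_def k4 by arith
    qed
    show "pos2 \<le> 3"
    proof (cases "z < n")
      case True then show ?thesis using bnd by simp
    next
      case False
      then have "z = n" "e2 = 1" using bnd by auto
      then show ?thesis using S(17) S(15) n_def k4 by arith
    qed
  qed
  obtain P1 Pm where PP: "P1 < Pm" "(P1 = pos1 \<and> Pm = pos2) \<or> (P1 = pos2 \<and> Pm = pos1)"
    using ne by (metis linorder_neqE_nat)
  have P1h: "p ! P1 \<in> set c" "1 \<le> P1" using PP(2) S(25) S(26) S(23) S(24) by auto
  have Pm3: "Pm \<le> 3" "Pm < z" using PP(2) p3 S(14) S(15) by auto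
  have Pmh: "p ! Pm \<in> set c" "P1 < Pm" "Pm \<le> 3" "Pm < length p"
    using PP S(25) S(26) Pm3 zlen by auto
  define P2 where "P2 = (LEAST j. P1 < j \<and> p ! j \<in> set c)"
  have P2: "P1 < P2" "p ! P2 \<in> set c" "P2 \<le> Pm"
    using LeastI[of "\<lambda>j. P1 < j \<and> p ! j \<in> set c" Pm] Least_le[of "\<lambda>j. P1 < j \<and> p ! j \<in> set c" Pm] Pmh
    unfolding P2_def by auto
  have nb: "\<forall>i. P1 < i \<and> i < P2 \<longrightarrow> p ! i \<notin> set c"
    using not_less_Least[of _ "\<lambda>j. P1 < j \<and> p ! j \<in> set c"] unfolding P2_def by blast
  have "k \<le> P2 - P1 + 2" using cons_lemma[OF cf P2(1) _ P1h(1) P2(2) nb] P2 Pmh by simp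
  then have kk: "k = 4" "P1 = 1" "Pm = 3" using k4 P2 Pmh P1h by linarith+
  then have "pos1 = 3 \<or> pos2 = 3" using PP(2) by auto
  then have zn: "\<not> z < n" using bnd by auto
  then have zn': "z = n" "e1 = 1" "e2 = 1" using bnd by auto
  have pp: "(pos1 = 1 \<and> pos2 = 3) \<or> (pos1 = 3 \<and> pos2 = 1)"
    using kk PP(2) by auto
  have w1: "c' ! 1 = p ! pos1" using S(12) zn' by simp
  have w2: "c' ! (n - 1) = p ! pos2" using S(13) zn' n_def by simp
  have cy': "is_cycle c'" "length c' = n" using S(1) S(2) n_def by auto
  define c4 where "c4 = rotate (n - 1) c'"
  have c4: "is_cycle c4" "length c4 = n" "cycle_edges c4 = cycle_edges c'"
      "\<forall>m<n. c4 ! m = c' ! ((n - 1 + m) mod n)"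
    using cy' unfolding c4_def by (auto simp: is_cycle_def ce_rotate nth_rotate)
  have n8: "n = 8" using kk n_def by simp
  have c40: "c4 ! 0 = c' ! (n - 1)" using c4(4) n8 by simp
  have c41: "c4 ! 1 = c' ! 0" using c4(4) n8 by simp
  have c42: "c4 ! 2 = c' ! 1" using c4(4) n8 by simp
  have ce4: "cycle_edges c4 = cycle_edges c" using c4(3) S(4) by simp
  have l4: "length c4 = 2 * k" using c4(2) n_def by simp
  have inter: "\<forall>i. 1 \<le> i \<and> i < 2 \<longrightarrow> c4 ! i \<notin> set (drop 1 (take (Suc 3) p))"
  proof (intro allI impI)
    fix i :: nat assume "1 \<le> i \<and> i < 2"
    then have i1: "i = 1" by simp
    show "c4 ! i \<notin> set (drop 1 (take (Suc 3) p))"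
    proof
      assume "c4 ! i \<in> set (drop 1 (take (Suc 3) p))"
      moreover have "3 < length p" using Pmh(4) kk by simp
      ultimately obtain m where m: "1 \<le> m" "m \<le> 3" "c4 ! i = p ! m" using seg_mem[of "c4 ! i" 1 3 p] by blast
      then have "p ! z = p ! m" using c41 i1 S(5) by simp
      moreover have "m < length p" using m \<open>3 < length p\<close> by simp
      ultimately have "z = m" using f(1) zlen by (simp add: nth_eq_iff_index_eq)
      then show False using m zn' n8 by simp
    qed
  qed
  have j3: "(1::nat) < 3" "3 < length p" using Pmh(4) kk by auto
  have "2 * k - 2 \<le> 3 - 1 + 2"
    using pp
  proof
    assume "pos1 = 1 \<and> pos2 = 3"
    then show ?thesis
      using seg1[OF cf c4(1) l4 ce4 j3, of 2] inter c40 c42 w1 w2 n8 n_def by simp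
  next
    assume "pos1 = 3 \<and> pos2 = 1"
    then show ?thesis
      using seg2[OF cf c4(1) l4 ce4 j3, of 2] inter c40 c42 w1 w2 n8 n_def by simp
  qed
  then show False using kk by simp
qed

lemma rev_nth_l: "cfg k l c p \<Longrightarrow> r \<le> l \<Longrightarrow> rev p ! r = p ! (l - r)"
  using cfg_facts(2)[of k l c p] by (simp add: rev_nth)

lemma first_le:
  assumes cf: "cfg k l c p" and zr: "islast c (rev p) zr" and i: "i < length p" "p ! i \<in> set c"
  shows "l - zr \<le> i"
proof -
  note f = cfg_facts[OF cf]
  have "rev p ! (l - i) = p ! i" using rev_nth_l[OF cf, of "l - i"] i f(2) by simp
  then have "rev p ! (l - i) \<in> set c" using i by simp
  moreover have "l - i < length (rev p)" using f(2) by simp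
  ultimately have "\<not> zr < l - i" using zr unfolding islast_def by blast
  then show ?thesis by simp
qed

lemma last_ge: "islast c p z \<Longrightarrow> i < length p \<Longrightarrow> p ! i \<in> set c \<Longrightarrow> i \<le> z"
  unfolding islast_def by (meson not_le)

lemma ee_case:
  assumes cf: "cfg k l c p" and zl: "islast c p z" and sd: "SD k l c p z c' e1 e2 pos1 pos2"
    and eq: "pos1 = pos2"
    and zr: "islast c (rev p) zr" and sdr: "SD k l c (rev p) zr cu f1 f2 r1 r2" and eqr: "r1 = r2"
  shows False
proof -
  note f = cfg_facts[OF cf]
  have cfr: "cfg k l c (rev p)" using cfg_rev[OF cf] .
  note S = SD_facts[OF cf zl sd]
  note R = SD_facts[OF cfr zr sdr]
  define n where "n = 2 * k"
  have zlen: "z < length p" using zl by (simp add: islast_def)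
  have sum1: "e1 + e2 = n" using S(20) eq n_def by simp
  have sum2: "f1 + f2 = n" using R(20) eqr n_def by simp
  have al: "l - zr \<le> pos1" using first_le[OF cf zr _ S(25)] S(14) zlen by simp
  have A1: "1 \<le> l - z \<and> l - z < n \<longrightarrow> n \<le> 2 * (l - z)"
  proof
    assume a: "1 \<le> l - z \<and> l - z < n"
    then have v: "1 \<le> l - z \<and> l - z < 2 * k \<and> (z + (l - z) = 2 * k \<or> z + (l - z) = l)" using S(21) n_def by auto
    have "e1 \<le> l - z" "e2 \<le> l - z" using S(10) S(11) v by blast+
    then show "n \<le> 2 * (l - z)" using sum1 by simp
  qed
  have A2: "z < n \<longrightarrow> n \<le> 2 * (n - z)"
  proof
    assume a: "z < n"
    then have v: "1 \<le> n - z \<and> n - z < 2 * k \<and> (z + (n - z) = 2 * k \<or> z + (n - z) = l)" using S(22) n_def by auto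
    have "e1 \<le> n - z" "e2 \<le> n - z" using S(10) S(11) v by blast+
    then show "n \<le> 2 * (n - z)" using sum1 by simp
  qed
  have B1: "1 \<le> l - zr \<and> l - zr < n \<longrightarrow> n \<le> 2 * (l - zr)"
  proof
    assume a: "1 \<le> l - zr \<and> l - zr < n"
    then have v: "1 \<le> l - zr \<and> l - zr < 2 * k \<and> (zr + (l - zr) = 2 * k \<or> zr + (l - zr) = l)" using R(21) n_def by auto
    have "f1 \<le> l - zr" "f2 \<le> l - zr" using R(10) R(11) v by blast+
    then show "n \<le> 2 * (l - zr)" using sum2 by simp
  qed
  have B2: "zr < n \<longrightarrow> n \<le> 2 * (n - zr)"
  proof
    assume a: "zr < n"
    then have v: "1 \<le> n - zr \<and> n - zr < 2 * k \<and> (zr + (n - zr) = 2 * k \<or> zr + (n - zr) = l)" using R(22) n_def by auto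
    have "f1 \<le> n - zr" "f2 \<le> n - zr" using R(10) R(11) v by blast+
    then show "n \<le> 2 * (n - zr)" using sum2 by simp
  qed
  show False using A1 A2 B1 B2 al S(14) S(21) S(22) R(21) R(22) f(7) f(8) f(9) n_def by arith
qed

lemma arc_thru_v:
  assumes cf: "cfg k l c p" and zl: "islast c p z" and sd: "SD k l c p z c' e1 e2 pos1 pos2"
    and ne: "pos1 \<noteq> pos2"
  shows "2 * k - 2 \<le> (max pos1 pos2 - min pos1 pos2) + e1 + e2"
proof -
  note f = cfg_facts[OF cf]
  note S = SD_facts[OF cf zl sd]
  define n where "n = 2 * k"
  have zlen: "z < length p" using zl by (simp add: islast_def)
  have en: "e1 + e2 < n" using S(20) ne n_def by simp
  define c5 where "c5 = rotate (n - e2) c'"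
  have cy': "is_cycle c'" "length c' = n" using S(1) S(2) n_def by auto
  have c5: "is_cycle c5" "length c5 = 2 * k" "cycle_edges c5 = cycle_edges c"
      "\<forall>m<n. c5 ! m = c' ! ((n - e2 + m) mod n)"
    using cy' S(4) n_def unfolding c5_def by (auto simp: is_cycle_def ce_rotate nth_rotate)
  have c50: "c5 ! 0 = p ! pos2"
  proof -
    have "0 < n" using n_def f(9) by simp
    then have "c5 ! 0 = c' ! ((n - e2 + 0) mod n)" using c5(4) by blast
    also have "(n - e2 + 0) mod n = n - e2" using S(8) S(9) n_def by simp
    finally show ?thesis using S(13) n_def by simp
  qed
  have c5e: "c5 ! (e1 + e2) = p ! pos1"
  proof -
    have "n - e2 + (e1 + e2) = n + e1" using S(9) n_def by simp
    moreover have "e1 < n" using en by simp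
    ultimately have "(n - e2 + (e1 + e2)) mod n = e1" by simp
    then show ?thesis using c5(4) en S(12) by simp
  qed
  define P1 where "P1 = min pos1 pos2"
  define Pm where "Pm = max pos1 pos2"
  have PP: "P1 < Pm" "Pm < z" "Pm < length p" unfolding P1_def Pm_def using ne S(14) S(15) zlen by auto
  have inter: "\<forall>i. 1 \<le> i \<and> i < e1 + e2 \<longrightarrow> c5 ! i \<notin> set (drop P1 (take (Suc Pm) p))"
  proof (intro allI impI notI)
    fix i assume i: "1 \<le> i \<and> i < e1 + e2" and mem: "c5 ! i \<in> set (drop P1 (take (Suc Pm) p))"
    obtain m where m: "P1 \<le> m" "m \<le> Pm" "c5 ! i = p ! m" using seg_mem[OF mem PP(3)] by blast
    have inp: "c5 ! i \<in> set p" using m PP(3) by simp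
    have ci: "c5 ! i = c' ! ((n - e2 + i) mod n)" using c5(4) i en by simp
    show False
    proof (cases "i < e2")
      case True
      then have "(n - e2 + i) mod n = n - e2 + i" using S(9) n_def by simp
      then have "c5 ! i = c' ! (n - e2 + i)" using ci by simp
      moreover have "2 * k - e2 < n - e2 + i \<and> n - e2 + i < 2 * k" using True i S(9) n_def by arith
      ultimately show False using S(19) inp by auto
    next
      case False
      then have idx: "(n - e2 + i) mod n = i - e2"
      proof -
        have "n - e2 + i = n + (i - e2)" using False S(9) n_def by simp
        moreover have "i - e2 < n" using i en by arith
        ultimately show ?thesis by simp
      qed
      show False
      proof (cases "i = e2")
        case True
        then have "c5 ! i = p ! z" using ci idx S(5) by simp
        then have "p ! z = p ! m" using m by simp
        then have "z = m" using f(1) zlen m PP by (simp add: nth_eq_iff_index_eq)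
        then show False using m PP by simp
      next
        case False
        then have "1 \<le> i - e2 \<and> i - e2 < e1" using i \<open>\<not> i < e2\<close> by arith
        then have "c' ! (i - e2) \<notin> set p" using S(18) by blast
        then show False using ci idx inp by simp
      qed
    qed
  qed
  have e1': "1 \<le> e1 + e2" "e1 + e2 < 2 * k" using S(6) en n_def by auto
  show ?thesis
  proof (cases "pos1 < pos2")
    case True
    then have "P1 = pos1" "Pm = pos2" unfolding P1_def Pm_def by auto
    then show ?thesis using seg1[OF cf c5(1) c5(2) c5(3) PP(1) PP(3) _ _ e1' inter] c50 c5e True
      unfolding P1_def Pm_def by simp
  next
    case False
    then have "P1 = pos2" "Pm = pos1" using ne unfolding P1_def Pm_def by auto
    then show ?thesis using seg2[OF cf c5(1) c5(2) c5(3) PP(1) PP(3) _ _ e1' inter] c50 c5e False ne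
      unfolding P1_def Pm_def by (simp add: max_def min_def)
  qed
qed

lemma arc_other:
  assumes cf: "cfg k l c p" and zl: "islast c p z" and sd: "SD k l c p z c' e1 e2 pos1 pos2"
    and adj: "pos1 = Suc pos2 \<or> pos2 = Suc pos1"
  shows "2 * k - 2 \<le> 1 + (2 * k - e1 - e2)"
proof -
  note f = cfg_facts[OF cf]
  note S = SD_facts[OF cf zl sd]
  define n where "n = 2 * k"
  have ne: "pos1 \<noteq> pos2" using adj by auto
  have zlen: "z < length p" using zl by (simp add: islast_def)
  have en: "e1 + e2 < n" using S(20) ne n_def by simp
  define c6 where "c6 = rotate e1 c'"
  have cy': "is_cycle c'" "length c' = n" using S(1) S(2) n_def by auto
  have dc': "distinct c'" using cy' by (simp add: is_cycle_def)
  have c6: "is_cycle c6" "length c6 = 2 * k" "cycle_edges c6 = cycle_edges c"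
      "\<forall>m<n. c6 ! m = c' ! ((e1 + m) mod n)"
    using cy' S(4) n_def unfolding c6_def by (auto simp: is_cycle_def ce_rotate nth_rotate)
  have c60: "c6 ! 0 = p ! pos1" using c6(4) S(12) S(7) n_def by simp
  have c6e: "c6 ! (n - e1 - e2) = p ! pos2"
  proof -
    have "(e1 + (n - e1 - e2)) mod n = n - e2" using en S(8) n_def by simp
    then show ?thesis using c6(4) en S(13) S(6) n_def by simp
  qed
  define P1 where "P1 = min pos1 pos2"
  define Pm where "Pm = max pos1 pos2"
  have PP: "P1 < Pm" "Pm < length p" "Pm = Suc P1" unfolding P1_def Pm_def using adj S(14) S(15) zlen by auto
  have inter: "\<forall>i. 1 \<le> i \<and> i < n - e1 - e2 \<longrightarrow> c6 ! i \<notin> set (drop P1 (take (Suc Pm) p))"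
  proof (intro allI impI notI)
    fix i assume i: "1 \<le> i \<and> i < n - e1 - e2" and mem: "c6 ! i \<in> set (drop P1 (take (Suc Pm) p))"
    obtain m where m: "P1 \<le> m" "m \<le> Pm" "c6 ! i = p ! m" using seg_mem[OF mem PP(2)] by blast
    have ilt: "i < n" "e1 + i < n" using i en by auto
    have "c6 ! i = c' ! ((e1 + i) mod n)" using c6(4) ilt(1) by blast
    then have ci: "c6 ! i = c' ! (e1 + i)" using ilt(2) by simp
    have "m = pos1 \<or> m = pos2" using m PP unfolding P1_def Pm_def by (auto simp: min_def max_def split: if_splits)
    then have "c' ! (e1 + i) = c' ! e1 \<or> c' ! (e1 + i) = c' ! (2 * k - e2)" using ci m S(12) S(13) by auto
    moreover have "e1 + i < n" "2 * k - e2 < n" "e1 < n" using i en S(8) n_def by auto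
    ultimately show False using dc' cy'(2) i n_def by (auto simp: nth_eq_iff_index_eq)
  qed
  have e1': "1 \<le> n - e1 - e2" "n - e1 - e2 < 2 * k" using S(6) en n_def by auto
  show ?thesis
  proof (cases "pos1 < pos2")
    case True
    then have "P1 = pos1" "Pm = pos2" unfolding P1_def Pm_def by auto
    then have "2 * k - 2 \<le> Pm - P1 + (n - e1 - e2)"
      using seg2[OF cf c6(1) c6(2) c6(3) PP(1) PP(2) _ _ e1' inter] c60 c6e by simp
    then show ?thesis using PP n_def by simp
  next
    case False
    then have "P1 = pos2" "Pm = pos1" using ne unfolding P1_def Pm_def by auto
    then have "2 * k - 2 \<le> Pm - P1 + (n - e1 - e2)"
      using seg1[OF cf c6(1) c6(2) c6(3) PP(1) PP(2) _ _ e1' inter] c60 c6e by simp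
    then show ?thesis using PP n_def by simp
  qed
qed

lemma finish_good:
  assumes d1: "distinct q1" and d2: "distinct q2" and n1: "q1 \<noteq> []" and n2: "q2 \<noteq> []"
    and un: "path_edges q1 \<union> path_edges q2 = E" and fE: "finite E"
    and cE: "card E = (length q1 - 1) + (length q2 - 1)"
    and l1: "path_len q1 \<in> {N, l}" and l2: "path_len q2 \<in> {N, l}"
    and k1: "card ({hd q1, last q1} \<inter> {hd p, last p}) = 1"
    and k2: "card ({hd q2, last q2} \<inter> {hd p, last p}) = 1"
  shows "good N l E p"
proof -
  have "card (path_edges q1) + card (path_edges q2) =
      card (path_edges q1 \<union> path_edges q2) + card (path_edges q1 \<inter> path_edges q2)"
    by (rule card_Un_Int) auto
  then have "card (path_edges q1 \<inter> path_edges q2) = 0" using card_pe[OF d1] card_pe[OF d2] un cE by simp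
  then have "path_edges q1 \<inter> path_edges q2 = {}" by simp
  then show ?thesis unfolding good_def is_path_def using d1 d2 n1 n2 un l1 l2 k1 k2 by blast
qed

lemma len6: "length xs = 6 \<Longrightarrow> \<exists>a0 a1 a2 a3 a4 a5. xs = [a0, a1, a2, a3, a4, a5]"
  by (auto simp: numeral_eq_Suc length_Suc_conv)

lemma len8: "length xs = 8 \<Longrightarrow> \<exists>a0 a1 a2 a3 a4 a5 a6 a7. xs = [a0, a1, a2, a3, a4, a5, a6, a7]"
  by (auto simp: numeral_eq_Suc length_Suc_conv)

lemma k3_con:
  assumes cf: "cfg 3 7 c p" and cy: "is_cycle d" and ld: "length d = 6"
    and ced: "cycle_edges d = cycle_edges c" and sd: "set d = set c"
    and d0: "d ! 0 = p ! 6" and d1: "d ! 1 = p ! 1" and d5: "d ! 5 = p ! 3"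
    and e14: "{p ! 1, p ! 4} \<in> cycle_edges c"
  shows "good 6 7 (cycle_edges c \<union> path_edges p) p"
proof -
  note f = cfg_facts[OF cf]
  obtain a0 a1 a2 a3 a4 a5 where dd: "d = [a0, a1, a2, a3, a4, a5]" using len6[OF ld] by blast
  obtain x b1 q1 b3 b4 q2 b6 y where pp: "p = [x, b1, q1, b3, b4, q2, b6, y]" using len8[of p] f(2) by auto
  have da: "distinct [a0, a1, a2, a3, a4, a5]" using cy dd by (simp add: is_cycle_def)
  have dp: "distinct [x, b1, q1, b3, b4, q2, b6, y]" using f(1) pp by simp
  have xy: "x \<notin> set c" "y \<notin> set c" using f(3) f(4) pp by auto
  have sc: "set c = {a0, a1, a2, a3, a4, a5}" using sd dd by simp
  have b: "b6 = a0" "b1 = a1" "b3 = a5" using d0 d1 d5 dd pp by auto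
  have ceq: "cycle_edges c = {{a0, a1}, {a1, a2}, {a2, a3}, {a3, a4}, {a4, a5}, {a5, a0}}"
    using ced dd by (simp add: cycle_edges_def)
  have pe: "path_edges p = {{x, b1}, {b1, q1}, {q1, b3}, {b3, b4}, {b4, q2}, {q2, b6}, {b6, y}}"
    using pp by simp
  have b4: "b4 = a2"
  proof -
    have "{b1, b4} \<in> cycle_edges c" using e14 pp by simp
    then have "{a1, b4} \<in> {{a0, a1}, {a1, a2}, {a2, a3}, {a3, a4}, {a4, a5}, {a5, a0}}" using ceq b by simp
    moreover have "b4 \<noteq> a0" "b4 \<noteq> a1" using dp b by auto
    ultimately show ?thesis using da by (auto simp: doubleton_eq_iff)
  qed
  have disj: "cycle_edges c \<inter> path_edges p = {}" using cf by (simp add: cfg_def)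
  have q1a4: "q1 \<noteq> a4"
  proof
    assume "q1 = a4"
    then have "{a4, a5} \<in> path_edges p" using pe b by simp
    moreover have "{a4, a5} \<in> cycle_edges c" using ceq by simp
    ultimately show False using disj by blast
  qed
  have q2a4: "q2 \<noteq> a4"
  proof
    assume q: "q2 = a4"
    have gir: "girth_at_least (cycle_edges c \<union> path_edges p) 4" using cf by (simp add: cfg_def)
    have "is_cycle [a4, a0, a5]" using da by (auto simp: is_cycle_def)
    moreover have "cycle_edges [a4, a0, a5] \<subseteq> cycle_edges c \<union> path_edges p"
      using ceq pe q b by (auto simp: cycle_edges_def insert_commute)
    ultimately have "4 \<le> length [a4, a0, a5]" using gir unfolding girth_at_least_def by blast
    then show False by simp
  qed
  define Q1 where "Q1 = [x, a1, a0, a5, a2, a3, a4]"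
  define Q2 where "Q2 = [y, a0, q2, a2, a1, q1, a5, a4]"
  have xa: "x \<notin> {a0, a1, a2, a3, a4, a5}" "y \<notin> {a0, a1, a2, a3, a4, a5}" using xy sc by auto
  have dQ1: "distinct Q1" unfolding Q1_def using da xa by auto
  have dQ2: "distinct Q2" unfolding Q2_def using da xa dp b b4 q1a4 q2a4 by auto
  have un: "path_edges Q1 \<union> path_edges Q2 = cycle_edges c \<union> path_edges p"
    unfolding ceq pe Q1_def Q2_def using b b4 by (auto simp: insert_commute)
  have cE: "card (cycle_edges c \<union> path_edges p) = 13"
  proof -
    have "card (cycle_edges c) = 6" using card_ce[of c] cf f(6) by (simp add: cfg_def)
    moreover have "card (path_edges p) = 7" using card_pe[OF f(1)] f(2) by simp
    ultimately show ?thesis using disj by (simp add: card_Un_disjoint cycle_edges_def)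
  qed
  show ?thesis
  proof (rule finish_good[OF dQ1 dQ2 _ _ un])
    show "Q1 \<noteq> []" "Q2 \<noteq> []" unfolding Q1_def Q2_def by auto
    show "finite (cycle_edges c \<union> path_edges p)" by (simp add: cycle_edges_def)
    show "card (cycle_edges c \<union> path_edges p) = length Q1 - 1 + (length Q2 - 1)"
      using cE unfolding Q1_def Q2_def by simp
    show "path_len Q1 \<in> {6, 7}" "path_len Q2 \<in> {6, 7}" unfolding Q1_def Q2_def path_len_def by auto
    have hp: "hd p = x" "last p = y" using pp by auto
    have xy': "x \<noteq> y" "a4 \<noteq> x" "a4 \<noteq> y" using dp xa by auto
    show "card ({hd Q1, last Q1} \<inter> {hd p, last p}) = 1"
      unfolding Q1_def hp using xy' by (simp add: Int_insert_left)
    show "card ({hd Q2, last Q2} \<inter> {hd p, last p}) = 1"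
      unfolding Q2_def hp using xy' by (simp add: Int_insert_left)
  qed
qed

lemma ce_01: "is_cycle c \<Longrightarrow> {c ! 0, c ! 1} \<in> cycle_edges c"
proof -
  assume "is_cycle c"
  then obtain a b t where "c = a # b # t" unfolding is_cycle_def
    by (metis Suc_le_length_iff numeral_3_eq_3)
  then show ?thesis by (simp add: cycle_edges_def)
qed

lemma ce_0l: "is_cycle c \<Longrightarrow> {c ! 0, c ! (length c - 1)} \<in> cycle_edges c"
proof -
  assume cy: "is_cycle c"
  then have ne: "c \<noteq> []" by (auto simp: is_cycle_def)
  then have "{last c, hd c} \<in> cycle_edges c" by (simp add: ce_alt)
  moreover have "{last c, hd c} = {c ! 0, c ! (length c - 1)}" using ne
    by (auto simp: hd_conv_nth last_conv_nth)
  ultimately show ?thesis by simp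
qed

lemma k3_case:
  assumes cf: "cfg k l c p" and k3: "k = 3" and zl: "islast c p z" and sd: "SD k l c p z c' e1 e2 pos1 pos2"
    and ne: "pos1 \<noteq> pos2"
    and zr: "islast c (rev p) zr" and sdr: "SD k l c (rev p) zr cu f1 f2 r1 r2"
  shows "good (2 * k) l (cycle_edges c \<union> path_edges p) p"
proof -
  note f = cfg_facts[OF cf]
  have cfr: "cfg k l c (rev p)" using cfg_rev[OF cf] .
  note S = SD_facts[OF cf zl sd]
  note R = SD_facts[OF cfr zr sdr]
  have zlen: "z < length p" using zl by (simp add: islast_def)
  have al1: "l - zr \<le> pos1" using first_le[OF cf zr _ S(25)] S(14) zlen by simp
  have al2: "l - zr \<le> pos2" using first_le[OF cf zr _ S(26)] S(15) zlen by simp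
  have hr1: "l - r1 \<le> z"
  proof -
    have "r1 \<le> l" using R(14) R(21) by simp
    then have "p ! (l - r1) \<in> set c" using rev_nth_l[OF cf] R(25) by simp
    then show ?thesis using last_ge[OF zl] f(2) by simp
  qed
  have hr2: "l - r2 \<le> z"
  proof -
    have "r2 \<le> l" using R(15) R(21) by simp
    then have "p ! (l - r2) \<in> set c" using rev_nth_l[OF cf] R(26) by simp
    then show ?thesis using last_ge[OF zl] f(2) by simp
  qed
  have AV: "4 \<le> (max pos1 pos2 - min pos1 pos2) + e1 + e2" using arc_thru_v[OF cf zl sd ne] k3 by simp
  have sv1: "e1 \<le> 1 \<and> e2 \<le> 1" if "z + 1 = l" using S(10) S(11) that k3 by simp
  have svr: "f1 \<le> 1 \<and> f2 \<le> 1" if "zr + 1 = l" using R(10) R(11) that k3 by simp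
  show ?thesis
  proof (cases "z < 6")
    case True
    have v6: "e1 \<le> 6 - z" "e2 \<le> 6 - z" using S(10) S(11) True S(22) k3 by auto
    have pb: "pos1 \<le> 2" "pos2 \<le> 2" using v6 S(16) S(17) S(14) S(15) k3 True by arith+
    have adj: "pos1 = Suc pos2 \<or> pos2 = Suc pos1" using pb ne S(23) S(24) by arith
    have AO: "4 \<le> 1 + (6 - e1 - e2)" using arc_other[OF cf zl sd adj] k3 by simp
    have mm: "max pos1 pos2 - min pos1 pos2 = 1" using adj by auto
    have s3: "e1 + e2 = 3" using AV AO mm by arith
    have z4: "z = 4" using s3 v6 S(16) S(17) pb S(23) S(24) k3 by arith
    have minp: "min pos1 pos2 = 1" using pb S(23) S(24) ne by arith
    have zr1: "zr + 1 = l" using al1 al2 minp R(21) by arith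
    then have f11: "f1 = 1" "f2 = 1" using svr R(6) R(8) by auto
    have "r1 \<noteq> r2" using R(20) f11 k3 by auto
    moreover have "r1 = l - 4" using R(16) f11 zr1 hr1 z4 k3 R(14) by arith
    moreover have "r2 = l - 4" using R(17) f11 zr1 hr2 z4 k3 R(15) by arith
    ultimately show ?thesis by simp
  next
    case False
    then have z6: "z = 6" "l = 7" using S(21) f(8) k3 by arith+
    have e11: "e1 = 1" "e2 = 1" using sv1 z6 S(6) S(8) by auto
    have pb: "pos1 \<le> 3" "pos2 \<le> 3" using S(16) S(17) S(14) S(15) e11 z6 k3 by arith+
    have pp: "(pos1 = 1 \<and> pos2 = 3) \<or> (pos1 = 3 \<and> pos2 = 1)"
      using AV e11 pb S(23) S(24) ne by (auto simp: max_def min_def split: if_splits)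
    have zr6: "zr = 6" using al1 al2 pp R(21) z6 by arith
    have f11: "f1 = 1" "f2 = 1" using svr zr6 z6 R(6) R(8) by auto
    have rne: "r1 \<noteq> r2" using R(20) f11 k3 by auto
    have AR: "4 \<le> (max r1 r2 - min r1 r2) + f1 + f2" using arc_thru_v[OF cfr zr sdr rne] k3 by simp
    have rb: "r1 \<le> 3" "r2 \<le> 3" using R(16) R(17) R(14) R(15) f11 zr6 k3 by arith+
    have rr: "(r1 = 1 \<and> r2 = 3) \<or> (r1 = 3 \<and> r2 = 1)"
      using AR f11 rb R(23) R(24) rne by (auto simp: max_def min_def split: if_splits)
    have cyu: "is_cycle cu" "length cu = 6" using R(1) R(2) k3 by auto
    have cu0: "cu ! 0 = p ! 1" using R(5) rev_nth_l[OF cf, of zr] zr6 z6 by simp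
    have cu1: "cu ! 1 = p ! (7 - r1)" using R(12) f11 rev_nth_l[OF cf, of r1] rr z6 by auto
    have cu5: "cu ! 5 = p ! (7 - r2)" using R(13) f11 rev_nth_l[OF cf, of r2] rr z6 k3 by auto
    have E1: "{cu ! 0, cu ! 1} \<in> cycle_edges c" using ce_01[OF cyu(1)] R(4) by simp
    have E5: "{cu ! 0, cu ! 5} \<in> cycle_edges c" using ce_0l[OF cyu(1)] cyu(2) R(4) by simp
    have e14: "{p ! 1, p ! 4} \<in> cycle_edges c" using rr E1 E5 cu0 cu1 cu5 by auto
    have cf37: "cfg 3 7 c p" using cf k3 z6 by simp
    have cy': "is_cycle c'" "length c' = 6" using S(1) S(2) k3 by auto
    have c'0: "c' ! 0 = p ! 6" using S(5) z6 by simp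
    have c'1: "c' ! 1 = p ! pos1" using S(12) e11 by simp
    have c'5: "c' ! 5 = p ! pos2" using S(13) e11 k3 by simp
    have "good 6 7 (cycle_edges c \<union> path_edges p) p"
    proof (cases "pos1 = 1")
      case True
      then have "pos2 = 3" using pp by simp
      then show ?thesis using k3_con[OF cf37 cy'(1) cy'(2) _ _ c'0 _ _ e14] S(3) S(4) c'1 c'5 True by simp
    next
      case False
      then have p31: "pos1 = 3" "pos2 = 1" using pp by auto
      note r = refl_props[OF cy'(1) cy'(2)]
      have "refl c' ! 1 = p ! 1" "refl c' ! 5 = p ! 3" using r c'1 c'5 p31 by auto
      moreover have "refl c' ! 0 = p ! 6" using r c'0 by simp
      ultimately show ?thesis using k3_con[OF cf37 _ _ _ _ _ _ _ e14, of "refl c'"] r S(3) S(4) by simp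
    qed
    then show ?thesis using k3 z6 by simp
  qed
qed

theorem main:
  assumes cf: "cfg k l c p"
  shows "good (2 * k) l (cycle_edges c \<union> path_edges p) p"
proof -
  note f = cfg_facts[OF cf]
  have cfr: "cfg k l c (rev p)" using cfg_rev[OF cf] .
  obtain z where zl: "islast c p z" using islast_ex[OF cf] by blast
  obtain zr where zr: "islast c (rev p) zr" using islast_ex[OF cfr] by blast
  have zr': "islast c (rev (rev p)) z" using zl by simp
  have Erev: "cycle_edges c \<union> path_edges (rev p) = cycle_edges c \<union> path_edges p" by simp
  show ?thesis
  proof (cases "good (2 * k) l (cycle_edges c \<union> path_edges p) p")
    case True then show ?thesis .
  next
    case False
    then obtain c' e1 e2 pos1 pos2 where sd: "SD k l c p z c' e1 e2 pos1 pos2"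
      using side[OF cf zl] by blast
    have "\<not> good (2 * k) l (cycle_edges c \<union> path_edges (rev p)) (rev p)"
      using False good_rev[OF f(10)] Erev by simp
    then obtain cu f1 f2 r1 r2 where sdr: "SD k l c (rev p) zr cu f1 f2 r1 r2"
      using side[OF cfr zr] by blast
    have sd': "SD k l c (rev (rev p)) z c' e1 e2 pos1 pos2" using sd by simp
    show ?thesis
    proof (cases "pos1 = pos2")
      case eq1: True
      show ?thesis
      proof (cases "r1 = r2")
        case True
        then show ?thesis using ee_case[OF cf zl sd eq1 zr sdr] by blast
      next
        case ne2: False
        show ?thesis
        proof (cases "k = 3")
          case True
          have "good (2 * k) l (cycle_edges c \<union> path_edges (rev p)) (rev p)"
            using k3_case[OF cfr True zr sdr ne2 zr' sd'] .
          then show ?thesis using good_rev[OF f(10)] Erev by simp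
        next
          case False
          then have "4 \<le> k" using f(9) by simp
          then show ?thesis using k4_case[OF cfr _ zr sdr ne2] by blast
        qed
      qed
    next
      case ne1: False
      show ?thesis
      proof (cases "k = 3")
        case True
        show ?thesis using k3_case[OF cf True zl sd ne1 zr sdr] .
      next
        case False
        then have "4 \<le> k" using f(9) by simp
        then show ?thesis using k4_case[OF cf _ zl sd ne1] by blast
      qed
    qed
  qed
qed

theorem mainTheorem7:
  fixes k l :: nat and c p :: "'a list"
  assumes "k \<ge> 3"
    and "is_cycle c" and "length c = 2 * k"
    and "is_path p" and "path_len p = l" and "l \<in> {2 * k - 1, 2 * k, 2 * k + 1}"
    and "cycle_edges c \<inter> path_edges p = {}"
    and "set c \<inter> set p \<noteq> {}"
    and "hd p \<notin> set c" and "last p \<notin> set c"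
    and "girth_at_least (cycle_edges c \<union> path_edges p) (2 * k - 2)"
  shows "\<exists>q1 q2. is_path q1 \<and> is_path q2
           \<and> path_edges q1 \<union> path_edges q2 = cycle_edges c \<union> path_edges p
           \<and> path_edges q1 \<inter> path_edges q2 = {}
           \<and> path_len q1 \<in> {2 * k, l} \<and> path_len q2 \<in> {2 * k, l}
           \<and> card ({hd q1, last q1} \<inter> {hd p, last p}) = 1
           \<and> card ({hd q2, last q2} \<inter> {hd p, last p}) = 1"
proof -
  have "cfg k l c p" unfolding cfg_def using assms by blast
  from main[OF this] show ?thesis unfolding good_def .
qed

end
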